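(* Let $\mathcal{A}$ be a commutative $\sigma$-finite W*-algebra or a commutative AW*-algebra, and let $\mathcal{E}$ be a Hilbert C*-module over $\mathcal{A}$ of rank $d$. Let $n\geq \max(d,2)$ and let $\{\tau_j\}_{j=1}^n$ be a collection in $\mathcal{E}$ with $\langle\tau_j,\tau_j\rangle=1$ for all $j$. Then \[ 1\geq \|I_{\mathrm{MRMS}} (\{\tau_j\}_{j=1}^n)\|\geq I_{\mathrm{MRMS}} (\{\tau_j\}_{j=1}^n)\geq \left(\frac{n-d}{d(n-1)}\right)^{1/2}. \]
   Context: A W*-algebra is $\sigma$-finite if it contains at most countably many mutually orthogonal (nonzero) projections. A C*-algebra is an AW*-algebra if every set of orthogonal projections has a supremum and every maximal commutative self-adjoint subalgebra is generated by its projections. Such algebras are unital, with identity $1$. The $\mathcal{A}$-valued inner product on $\mathcal{E}$ is linear in the first variable and conjugate-linear in the second. $\mathcal{E}$ has rank $d$ if it has an orthonormal basis $\{\omega_j\}_{j=1}^d$, i.e. $\langle\omega_j,\omega_k\rangle=\delta_{jk}1$ and $x=\sum_{j=1}^d\langle x,\omega_j\rangle\omega_j$ for all $x$. The modular root-mean-square cross relation is the positive element \[ I_{\mathrm{MRMS}} (\{\tau_j\}_{j=1}^n)= \left(\frac{1}{n(n-1)}\sum _{1\leq j,k \leq n,\, j\neq k}\langle \tau_j, \tau_k\rangle \langle \tau_k, \tau_j\rangle \right)^{1/2}\in\mathcal{A} \] (positive square root). Inequalities between elements of $\mathcal{A}$ are in the order on self-adjoint elements, a real number $c$ being identified with $c\cdot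 1$; $\|\cdot\|$ is the C*-norm. *)

theory Defs
  imports "HOL-Analysis.Analysis"
begin

text \<open>
  A unital commutative complex C*-algebra is encoded on a type
  'a :: {real_normed_algebra_1, comm_ring_1, banach} (Banach algebra with unit of norm 1,
  commutative multiplication) together with
  emb : complex => 'a   (the scalars, c |-> c*1; complex scalar multiplication is emb c * a)
  st  : 'a => 'a        (the involution).
\<close>

definition cstar_algebra ::
  "(complex \<Rightarrow> 'a::{real_normed_algebra_1,comm_ring_1,banach}) \<Rightarrow> ('a \<Rightarrow> 'a) \<Rightarrow> bool" where
  "cstar_algebra emb st \<longleftrightarrow>
     (\<forall>c d. emb (c + d) = emb c + emb d) \<and>
     (\<forall>c d. emb (c * d) = emb c * emb d) \<and>
     emb 1 = 1 \<and>
     (\<forall>r a. scaleR r a = emb (complex_of_real r) * a) \<and>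
     (\<forall>c a. norm (emb c * a) = cmod c * norm a) \<and>
     (\<forall>a b. st (a + b) = st a + st b) \<and>
     (\<forall>a b. st (a * b) = st b * st a) \<and>
     (\<forall>c. st (emb c) = emb (cnj c)) \<and>
     (\<forall>a. st (st a) = a) \<and>
     (\<forall>a. norm (st a * a) = (norm a)\<^sup>2)"

definition invertible_el :: "'a::ring_1 \<Rightarrow> bool" where
  "invertible_el x \<longleftrightarrow> (\<exists>y. x * y = 1 \<and> y * x = 1)"

definition positive_el :: "(complex \<Rightarrow> 'a::ring_1) \<Rightarrow> ('a \<Rightarrow> 'a) \<Rightarrow> 'a \<Rightarrow> bool" where
  "positive_el emb st a \<longleftrightarrow> st a = a \<and>
     (\<forall>z. \<not> invertible_el (a - emb z) \<longrightarrow> Im z = 0 \<and> Re z \<ge> 0)"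

definition cle :: "(complex \<Rightarrow> 'a::ring_1) \<Rightarrow> ('a \<Rightarrow> 'a) \<Rightarrow> 'a \<Rightarrow> 'a \<Rightarrow> bool" where
  "cle emb st a b \<longleftrightarrow> positive_el emb st (b - a)"

definition psqrt :: "(complex \<Rightarrow> 'a::ring_1) \<Rightarrow> ('a \<Rightarrow> 'a) \<Rightarrow> 'a \<Rightarrow> 'a" where
  "psqrt emb st s = (THE r. positive_el emb st r \<and> r * r = s)"

definition is_proj :: "('a::ring_1 \<Rightarrow> 'a) \<Rightarrow> 'a \<Rightarrow> bool" where
  "is_proj st p \<longleftrightarrow> st p = p \<and> p * p = p"

definition proj_le :: "'a::ring_1 \<Rightarrow> 'a \<Rightarrow> bool" where
  "proj_le p q \<longleftrightarrow> p * q = p"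

definition orth_proj_family :: "('a::ring_1 \<Rightarrow> 'a) \<Rightarrow> 'a set \<Rightarrow> bool" where
  "orth_proj_family st P \<longleftrightarrow> (\<forall>p\<in>P. is_proj st p) \<and> (\<forall>p\<in>P. \<forall>q\<in>P. p \<noteq> q \<longrightarrow> p * q = 0)"

definition star_subalg :: "(complex \<Rightarrow> 'a::ring_1) \<Rightarrow> ('a \<Rightarrow> 'a) \<Rightarrow> 'a set \<Rightarrow> bool" where
  "star_subalg emb st B \<longleftrightarrow> 0 \<in> B \<and>
     (\<forall>a\<in>B. \<forall>b\<in>B. a + b \<in> B \<and> a * b \<in> B) \<and>
     (\<forall>c. \<forall>a\<in>B. emb c * a \<in> B) \<and> (\<forall>a\<in>B. st a \<in> B)"

definition comm_sa_subalg :: "(complex \<Rightarrow> 'a::ring_1) \<Rightarrow> ('a \<Rightarrow> 'a) \<Rightarrow> 'a set \<Rightarrow> bool" where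
  "comm_sa_subalg emb st B \<longleftrightarrow> star_subalg emb st B \<and> (\<forall>a\<in>B. \<forall>b\<in>B. a * b = b * a)"

definition max_comm_sa_subalg :: "(complex \<Rightarrow> 'a::ring_1) \<Rightarrow> ('a \<Rightarrow> 'a) \<Rightarrow> 'a set \<Rightarrow> bool" where
  "max_comm_sa_subalg emb st B \<longleftrightarrow> comm_sa_subalg emb st B \<and>
     (\<forall>C. comm_sa_subalg emb st C \<and> B \<subseteq> C \<longrightarrow> C = B)"

definition cstar_gen :: "(complex \<Rightarrow> 'a::{ring_1,topological_space}) \<Rightarrow> ('a \<Rightarrow> 'a) \<Rightarrow> 'a set \<Rightarrow> 'a set" where
  "cstar_gen emb st S = \<Inter>{C. S \<subseteq> C \<and> star_subalg emb st C \<and> closed C}"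

definition AWstar :: "(complex \<Rightarrow> 'a::{ring_1,topological_space}) \<Rightarrow> ('a \<Rightarrow> 'a) \<Rightarrow> bool" where
  "AWstar emb st \<longleftrightarrow>
     (\<forall>P. orth_proj_family st P \<longrightarrow>
        (\<exists>s. is_proj st s \<and> (\<forall>p\<in>P. proj_le p s) \<and>
             (\<forall>t. is_proj st t \<and> (\<forall>p\<in>P. proj_le p t) \<longrightarrow> proj_le s t))) \<and>
     (\<forall>B. max_comm_sa_subalg emb st B \<longrightarrow> B = cstar_gen emb st {p\<in>B. is_proj st p})"

text \<open>W*-algebras: C*-algebras that are (isometrically) dual Banach spaces. The predual is
  realised as a norm-closed subspace V of the Banach dual, such that the canonical map
  a |-> (f |-> f a) is an isometric isomorphism of the algebra onto the dual of V.\<close>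

definition bdd_cfunctional :: "(complex \<Rightarrow> 'a::real_normed_algebra_1) \<Rightarrow> ('a \<Rightarrow> complex) \<Rightarrow> bool" where
  "bdd_cfunctional emb f \<longleftrightarrow> (\<forall>a b. f (a + b) = f a + f b) \<and> (\<forall>c a. f (emb c * a) = c * f a) \<and>
     (\<exists>K. \<forall>a. cmod (f a) \<le> K * norm a)"

definition fnorm :: "('a::real_normed_vector \<Rightarrow> complex) \<Rightarrow> real" where
  "fnorm f = (SUP a\<in>{a. norm a \<le> 1}. cmod (f a))"

definition Wstar :: "(complex \<Rightarrow> 'a::real_normed_algebra_1) \<Rightarrow> bool" where
  "Wstar emb \<longleftrightarrow> (\<exists>V.
     V \<subseteq> {f. bdd_cfunctional emb f} \<and> (\<lambda>_. 0) \<in> V \<and>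
     (\<forall>f\<in>V. \<forall>g\<in>V. (\<lambda>a. f a + g a) \<in> V) \<and> (\<forall>c. \<forall>f\<in>V. (\<lambda>a. c * f a) \<in> V) \<and>
     (\<forall>F f. (\<forall>i. F i \<in> V) \<and> bdd_cfunctional emb f \<and>
            (\<lambda>i. fnorm (\<lambda>a. F i a - f a)) \<longlonglongrightarrow> 0 \<longrightarrow> f \<in> V) \<and>
     (\<forall>g. (\<forall>f\<in>V. \<forall>h\<in>V. g (\<lambda>a. f a + h a) = g f + g h) \<and>
          (\<forall>c. \<forall>f\<in>V. g (\<lambda>a. c * f a) = c * g f) \<and>
          (\<exists>K. \<forall>f\<in>V. cmod (g f) \<le> K * fnorm f)
          \<longrightarrow> (\<exists>a. \<forall>f\<in>V. g f = f a)) \<and>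
     (\<forall>a. norm a = (SUP f\<in>{f\<in>V. fnorm f \<le> 1}. cmod (f a))))"

definition sigma_finite_alg :: "('a::ring_1 \<Rightarrow> 'a) \<Rightarrow> bool" where
  "sigma_finite_alg st \<longleftrightarrow> (\<forall>P. orth_proj_family st P \<and> 0 \<notin> P \<longrightarrow> countable P)"

definition sigma_finite_Wstar :: "(complex \<Rightarrow> 'a::real_normed_algebra_1) \<Rightarrow> ('a \<Rightarrow> 'a) \<Rightarrow> bool" where
  "sigma_finite_Wstar emb st \<longleftrightarrow> Wstar emb \<and> sigma_finite_alg st"

definition hilbert_module ::
  "(complex \<Rightarrow> 'a::{real_normed_algebra_1,comm_ring_1,banach}) \<Rightarrow> ('a \<Rightarrow> 'a) \<Rightarrow>
   ('a \<Rightarrow> 'm::ab_group_add \<Rightarrow> 'm) \<Rightarrow> ('m \<Rightarrow> 'm \<Rightarrow> 'a) \<Rightarrow> bool" where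
  "hilbert_module emb st act ip \<longleftrightarrow>
     (\<forall>a b x. act (a + b) x = act a x + act b x) \<and>
     (\<forall>a x y. act a (x + y) = act a x + act a y) \<and>
     (\<forall>a b x. act (a * b) x = act a (act b x)) \<and>
     (\<forall>x. act 1 x = x) \<and>
     (\<forall>x y z. ip (x + y) z = ip x z + ip y z) \<and>
     (\<forall>a x y. ip (act a x) y = a * ip x y) \<and>
     (\<forall>x y. ip y x = st (ip x y)) \<and>
     (\<forall>x. positive_el emb st (ip x x)) \<and>
     (\<forall>x. ip x x = 0 \<longrightarrow> x = 0) \<and>
     (\<forall>X::nat \<Rightarrow> 'm.
        (\<forall>e>0. \<exists>N. \<forall>m\<ge>N. \<forall>k\<ge>N. sqrt (norm (ip (X m - X k) (X m - X k))) < e) \<longrightarrow>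
        (\<exists>L. \<forall>e>0. \<exists>N. \<forall>k\<ge>N. sqrt (norm (ip (X k - L) (X k - L))) < e))"

definition has_rank ::
  "('a::comm_ring_1 \<Rightarrow> 'm::ab_group_add \<Rightarrow> 'm) \<Rightarrow> ('m \<Rightarrow> 'm \<Rightarrow> 'a) \<Rightarrow> nat \<Rightarrow> bool" where
  "has_rank act ip d \<longleftrightarrow> (\<exists>\<omega>::nat \<Rightarrow> 'm.
     (\<forall>j<d. \<forall>k<d. ip (\<omega> j) (\<omega> k) = (if j = k then 1 else 0)) \<and>
     (\<forall>x. x = (\<Sum>j<d. act (ip x (\<omega> j)) (\<omega> j))))"

definition I_MRMS ::
  "(complex \<Rightarrow> 'a::comm_ring_1) \<Rightarrow> ('a \<Rightarrow> 'a) \<Rightarrow> ('m \<Rightarrow> 'm \<Rightarrow> 'a) \<Rightarrow> nat \<Rightarrow> (nat \<Rightarrow> 'm) \<Rightarrow> 'a" where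
  "I_MRMS emb st ip n \<tau> = psqrt emb st
     (emb (complex_of_real (1 / (real n * (real n - 1)))) *
      (\<Sum>j<n. \<Sum>k\<in>{..<n} - {j}. ip (\<tau> j) (\<tau> k) * ip (\<tau> k) (\<tau> j)))"

end

theory Submission
  imports Defs "HOL-Computational_Algebra.Formal_Power_Series"
begin

definition cc :: "nat \<Rightarrow> real" where "cc k = (-1)^k * ((1/2::real) gchoose k)"

lemma cc_0: "cc 0 = 1" by (simp add: cc_def)

lemma cc_nonpos: assumes "k \<ge> 1" shows "cc k \<le> 0"
proof -
  obtain j where k: "k = Suc j" using assms by (cases k) auto
  have "cc k = pochhammer (-1/2) k / fact k"
    unfolding cc_def gbinomial_pochhammer by (simp add: power_mult_distrib[symmetric])
  also have "pochhammer (-1/2::real) k = (-1/2) * pochhammer (1/2) j"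
    unfolding k pochhammer_rec by simp
  finally show ?thesis using pochhammer_pos[of "1/2::real" j]
    by (simp add: divide_nonpos_pos)
qed

lemma cc_psum: "(\<Sum>k\<le>m. cc k) \<ge> 0"
proof -
  have "(\<Sum>k\<le>m. cc k) = (\<Sum>k\<le>m. ((1/2::real) gchoose k) * (-1)^k)"
    by (simp add: cc_def mult.commute)
  also have "\<dots> = (-1)^m * ((1/2 - 1) gchoose m)" by (rule gbinomial_sum_lower_neg)
  also have "\<dots> = pochhammer (1/2) m / fact m"
    by (simp add: gbinomial_pochhammer power_mult_distrib[symmetric])
  finally show ?thesis by (simp add: pochhammer_nonneg)
qed

lemma cc_abs_tail: "(\<Sum>k<m. \<bar>cc (Suc k)\<bar>) \<le> 1"
proof -
  have "(\<Sum>k<m. \<bar>cc (Suc k)\<bar>) = - (\<Sum>k<m. cc (Suc k))"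
    using cc_nonpos by (simp add: sum_negf[symmetric])
  also have "(\<Sum>k<m. cc (Suc k)) = (\<Sum>k\<le>m. cc k) - 1"
    using sum.atMost_shift[of cc m] by (simp add: cc_0 lessThan_Suc_atMost)
  finally show ?thesis using cc_psum[of m] by linarith
qed

lemma summable_cc_tail: "summable (\<lambda>k. \<bar>cc (Suc k)\<bar>)"
  using bounded_imp_summable[of "\<lambda>k. \<bar>cc (Suc k)\<bar>" 1] cc_abs_tail
  by (metis abs_ge_zero lessThan_Suc_atMost)

lemma summable_cc: "summable (\<lambda>k. \<bar>cc k\<bar>)"
  using summable_cc_tail summable_Suc_iff by blast

lemma suminf_cc_tail: "(\<Sum>k. \<bar>cc (Suc k)\<bar>) \<le> 1"
  using suminf_le_const[OF summable_cc_tail] cc_abs_tail by blast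

lemma cc_conv: "(\<Sum>i\<le>k. cc i * cc (k - i)) = (if k = 0 then 1 else if k = 1 then -1 else 0)"
proof -
  have "(\<Sum>i\<le>k. cc i * cc (k - i)) = (-1)^k * (\<Sum>i\<in>{0..k}. ((1/2::real) gchoose i) * ((1/2) gchoose (k - i)))"
    unfolding sum_distrib_left atMost_atLeast0
    by (rule sum.cong) (auto simp: cc_def power_add[symmetric])
  also have "\<dots> = (-1)^k * ((1::real) gchoose k)" by (simp add: gbinomial_Vandermonde)
  also have "(1::real) gchoose k = of_nat (1 choose k)"
    by (metis binomial_gbinomial of_nat_1)
  finally show ?thesis by (cases k) (auto simp: binomial_eq_0)
qed

lemma inv_el_iff: "invertible_el (x::'a::comm_ring_1) \<longleftrightarrow> (\<exists>y. x * y = 1)"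
  unfolding invertible_el_def by (auto simp: mult.commute)

lemma inv_el_mult: "invertible_el (x::'a::comm_ring_1) \<Longrightarrow> invertible_el y \<Longrightarrow> invertible_el (x*y)"
  unfolding inv_el_iff by (metis mult.assoc mult.left_commute mult_1_right)

lemma inv_el_factor: "invertible_el ((x::'a::comm_ring_1) * y) \<Longrightarrow> invertible_el x"
  unfolding inv_el_iff by (metis mult.assoc)

lemma inv_el_minus: "invertible_el (-(x::'a::comm_ring_1)) \<longleftrightarrow> invertible_el x"
  unfolding inv_el_iff
proof
  assume "\<exists>y. - x * y = 1" then obtain y where "- x * y = 1" by blast
  hence "x * (- y) = 1" by simp
  thus "\<exists>y. x * y = 1" by blast
next
  assume "\<exists>y. x * y = 1" then obtain y where "x * y = 1" by blast
  hence "- x * (- y) = 1" by simp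
  thus "\<exists>y. - x * y = 1" by blast
qed

lemma neumann:
  fixes x :: "'a::{real_normed_algebra_1,comm_ring_1,banach}"
  assumes "norm x < 1" shows "invertible_el (1 - x)"
proof -
  have sn: "summable (\<lambda>k. norm (x^k))"
    by (rule summable_comparison_test'[where g="\<lambda>k. norm x ^ k"])
       (auto simp: assms summable_geometric norm_power_ineq)
  hence s: "summable (\<lambda>k. x^k)" by (rule summable_norm_cancel)
  have "(\<Sum>k. x^Suc k) = (\<Sum>k. x^k) - 1" using suminf_split_head[OF s] by simp
  moreover have "(\<Sum>k. x^Suc k) = x * (\<Sum>k. x^k)"
    using suminf_mult[OF s, of x] by simp
  ultimately have "(1 - x) * (\<Sum>k. x^k) = 1" by (simp add: algebra_simps)
  thus ?thesis unfolding inv_el_iff by blast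
qed

locale cstar =
  fixes emb :: "complex \<Rightarrow> 'a::{real_normed_algebra_1,comm_ring_1,banach}" and st :: "'a \<Rightarrow> 'a"
  assumes cs: "cstar_algebra emb st"
begin

lemma emb_add: "emb (c + d) = emb c + emb d" using cs unfolding cstar_algebra_def by blast
lemma emb_mult: "emb (c * d) = emb c * emb d" using cs unfolding cstar_algebra_def by blast
lemma emb_1[simp]: "emb 1 = 1" using cs unfolding cstar_algebra_def by blast
lemma scaleR_emb: "scaleR r a = emb (complex_of_real r) * a" using cs unfolding cstar_algebra_def by blast
lemma norm_emb_mult: "norm (emb c * a) = cmod c * norm a" using cs unfolding cstar_algebra_def by blast
lemma st_add: "st (a + b) = st a + st b" using cs unfolding cstar_algebra_def by blast
lemma st_mult: "st (a * b) = st a * st b" using cs unfolding cstar_algebra_def by (simp add: mult.commute)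
lemma st_emb: "st (emb c) = emb (cnj c)" using cs unfolding cstar_algebra_def by blast
lemma st_st[simp]: "st (st a) = a" using cs unfolding cstar_algebra_def by blast
lemma cstar_id: "norm (st a * a) = (norm a)\<^sup>2" using cs unfolding cstar_algebra_def by blast

lemma emb_of_real: "emb (complex_of_real r) = of_real r"
  using scaleR_emb[of r 1] by (simp add: of_real_def)

lemma emb_0[simp]: "emb 0 = 0" using emb_add[of 0 0] by simp
lemma emb_minus: "emb (- c) = - emb c" using emb_add[of c "-c"] by (metis emb_0 neg_eq_iff_add_eq_0 right_minus)
lemma emb_diff: "emb (c - d) = emb c - emb d" using emb_add[of c "-d"] by (simp add: emb_minus)
lemma norm_emb: "norm (emb c) = cmod c" using norm_emb_mult[of c 1] by simp

lemma st_0[simp]: "st 0 = 0" using st_add[of 0 0] by simp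
lemma st_minus: "st (- a) = - st a" using st_add[of a "-a"] by (metis st_0 neg_eq_iff_add_eq_0 right_minus)
lemma st_diff: "st (a - b) = st a - st b" using st_add[of a "-b"] by (simp add: st_minus)
lemma st_1[simp]: "st 1 = 1" using st_emb[of 1] by simp
lemma st_of_real[simp]: "st (of_real r) = of_real r"
  using st_emb[of "complex_of_real r"] by (simp add: emb_of_real)
lemma st_scaleR: "st (scaleR r a) = scaleR r (st a)"
  by (simp add: scaleR_conv_of_real st_mult)
lemma st_sum: "st (sum f A) = sum (\<lambda>i. st (f i)) A"
  by (induction A rule: infinite_finite_induct) (auto simp: st_add)
lemma st_power: "st (a ^ k) = st a ^ k"
  by (induction k) (auto simp: st_mult)

lemma norm_st[simp]: "norm (st a) = norm a"
proof -
  have le: "norm b \<le> norm (st b)" for b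
  proof (cases "b = 0")
    case False
    have "(norm b)\<^sup>2 \<le> norm (st b) * norm b" using cstar_id[of b] norm_mult_ineq[of "st b" b] by simp
    thus ?thesis using False by (simp add: power2_eq_square)
  qed simp
  show ?thesis using le[of a] le[of "st a"] by simp
qed

lemma norm_sa_sq: "st h = h \<Longrightarrow> norm (h * h) = (norm h)\<^sup>2"
  using cstar_id[of h] by simp

lemma bl_st: "bounded_linear st"
  by (rule bounded_linear_intro[where K=1]) (auto simp: st_add st_scaleR)

definition J where "J = emb \<i>"
lemma JJ: "J * J = -1" unfolding J_def emb_mult[symmetric] by (simp add: emb_minus)
lemma JJ': "J * (J * a) = - a" using JJ by (metis mult.assoc mult_minus1)
lemma st_J: "st J = - J" unfolding J_def st_emb by (simp add: emb_minus)
lemma norm_J: "norm (J * a) = norm a" unfolding J_def norm_emb_mult by simp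

lemma N2: assumes "norm x < cmod w" shows "invertible_el (x - emb w)"
proof -
  have w: "w \<noteq> 0" using assms by auto
  let ?y = "emb (1/w) * x"
  have "norm ?y < 1" using assms w by (simp add: norm_emb_mult norm_divide divide_simps)
  hence i1: "invertible_el (1 - ?y)" by (rule neumann)
  have e: "emb w * emb (1/w) = 1" using w by (simp add: emb_mult[symmetric])
  have i2: "invertible_el (- emb w)" unfolding inv_el_iff by (rule exI[of _ "- emb (1/w)"]) (simp add: e)
  have "x - emb w = (- emb w) * (1 - ?y)" using e by (simp add: algebra_simps)
  thus ?thesis using inv_el_mult[OF i2 i1] by simp
qed

lemma E2: assumes h: "st h = h" and z: "Im z \<noteq> 0" shows "invertible_el (h - emb z)"
proof (rule ccontr)
  assume ni: "\<not> invertible_el (h - emb z)"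
  have key: "(Re z)\<^sup>2 + (Im z + t)\<^sup>2 \<le> (norm h)\<^sup>2 + t\<^sup>2" for t :: real
  proof -
    have eq: "h - emb z = (h + J * of_real t) - emb (z + \<i> * complex_of_real t)"
      by (simp add: emb_add emb_mult J_def emb_of_real)
    have "\<not> norm (h + J * of_real t) < cmod (z + \<i> * complex_of_real t)"
      using N2 ni eq by metis
    hence c: "cmod (z + \<i> * complex_of_real t) \<le> norm (h + J * of_real t)" by simp
    have "(cmod (z + \<i> * complex_of_real t))\<^sup>2 = (Re z)\<^sup>2 + (Im z + t)\<^sup>2"
      by (simp add: cmod_power2)
    moreover have "(norm (h + J * of_real t))\<^sup>2 = norm (h * h + of_real (t\<^sup>2))"
    proof -
      have su: "st (h + J * of_real t) = h - J * of_real t" by (simp add: st_add st_mult st_J h)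
      have "(h - J * of_real t) * (h + J * of_real t) = h * h - (J * J) * (of_real t * of_real t)"
        by (simp add: algebra_simps)
      hence "st (h + J * of_real t) * (h + J * of_real t) = h * h + of_real (t\<^sup>2)"
        using su by (simp add: JJ power2_eq_square)
      thus ?thesis using cstar_id[of "h + J * of_real t"] by simp
    qed
    moreover have "norm (h * h + of_real (t\<^sup>2)) \<le> (norm h)\<^sup>2 + t\<^sup>2"
    proof -
      have "norm (of_real (t\<^sup>2) :: 'a) = t\<^sup>2" by (simp only: norm_of_real) simp
      thus ?thesis using norm_triangle_ineq[of "h*h" "of_real (t\<^sup>2)"] norm_mult_ineq[of h h]
        by (simp only: power2_eq_square)
    qed
    ultimately show ?thesis using c
      by (smt (verit, ccfv_SIG) norm_ge_zero power_mono)
  qed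
  define t where "t = ((norm h)\<^sup>2 + 1) / (2 * Im z)"
  have "2 * Im z * t = (norm h)\<^sup>2 + 1" using z by (simp add: t_def)
  moreover have "(Re z)\<^sup>2 + (Im z + t)\<^sup>2 = (Re z)\<^sup>2 + (Im z)\<^sup>2 + 2 * Im z * t + t\<^sup>2"
    by (simp add: power2_eq_square algebra_simps)
  ultimately show False using key[of t]
    by (smt (verit) zero_le_power2)
qed

end

context cstar begin

definition pc :: "'a \<Rightarrow> bool" where
  "pc x \<longleftrightarrow> st x = x \<and> (\<exists>R\<ge>0. norm (of_real R - x) \<le> R)"

lemma pc_mono: fixes x :: 'a
  assumes "norm (of_real R - x) \<le> R" "R \<le> R'" shows "norm (of_real R' - x) \<le> R'"
proof -
  have "norm (of_real R' - of_real R :: 'a) = \<bar>R' - R\<bar>"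
    by (metis norm_of_real of_real_diff)
  hence "norm (of_real R' - of_real R :: 'a) \<le> R' - R" using assms(2) by simp
  from norm_diff_triangle_le[OF this assms(1)] show ?thesis by simp
qed

lemma pc_add: assumes "pc x" "pc y" shows "pc (x + y)"
proof -
  obtain R1 R2 where r: "R1 \<ge> 0" "R2 \<ge> 0" "norm (of_real R1 - x) \<le> R1" "norm (of_real R2 - y) \<le> R2"
    using assms unfolding pc_def by blast
  have "norm (of_real (R1 + R2) - (x + y)) = norm ((of_real R1 - x) + (of_real R2 - y))"
    by (rule arg_cong[where f=norm]) (simp add: algebra_simps)
  also have "\<dots> \<le> R1 + R2"
    using r norm_triangle_ineq[of "of_real R1 - x" "of_real R2 - y"] by linarith
  finally have "norm (of_real (R1 + R2) - (x + y)) \<le> R1 + R2" .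
  thus ?thesis using assms r unfolding pc_def by (auto simp: st_add intro!: exI[of _ "R1+R2"])
qed

lemma pc_scale: assumes "pc x" "c \<ge> 0" shows "pc (scaleR c x)"
proof -
  obtain R where r: "R \<ge> 0" "norm (of_real R - x) \<le> R" using assms unfolding pc_def by blast
  have "of_real (c * R) - scaleR c x = scaleR c (of_real R - x)" by (simp add: algebra_simps scaleR_conv_of_real)
  hence "norm (of_real (c * R) - scaleR c x) \<le> c * R" using r assms(2) by (simp add: mult_left_mono)
  thus ?thesis using assms r unfolding pc_def by (auto simp: st_scaleR intro!: exI[of _ "c*R"])
qed

lemma pc_of_real: "r \<ge> 0 \<Longrightarrow> pc (of_real r)"
  unfolding pc_def by (auto intro!: exI[of _ r])

lemma pc_0: "pc 0" using pc_of_real[of 0] by simp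

lemma pc_sum: "(\<And>i. i \<in> A \<Longrightarrow> pc (f i)) \<Longrightarrow> pc (sum f A)"
  by (induction A rule: infinite_finite_induct) (auto simp: pc_0 pc_add)

lemma pc_bound: assumes "st h = h" "norm h \<le> c" shows "pc (of_real c - h)"
proof -
  have "0 \<le> c" using assms(2) norm_ge_zero[of h] by linarith
  thus ?thesis unfolding pc_def using assms by (auto simp: st_diff intro!: exI[of _ c])
qed

lemma pc_bound': assumes "st h = h" "norm h \<le> c" shows "pc (of_real c + h)"
  using pc_bound[of "-h" c] assms by (simp add: st_minus)

lemma pc_pos: assumes "pc x" shows "positive_el emb st x"
  unfolding positive_el_def
proof (intro conjI allI impI)
  show "st x = x" using assms pc_def by blast
  fix z assume ni: "\<not> invertible_el (x - emb z)"
  show im: "Im z = 0" using E2[of x z] ni \<open>st x = x\<close> by blast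
  show "Re z \<ge> 0"
  proof (rule ccontr)
    assume neg: "\<not> Re z \<ge> 0"
    obtain R where r: "R \<ge> 0" "norm (of_real R - x) \<le> R" using assms unfolding pc_def by blast
    have zr: "z = complex_of_real (Re z)" using im by (simp add: complex_eq_iff)
    have "complex_of_real R - z = complex_of_real (R - Re z)" using zr by (metis of_real_diff)
    hence "cmod (complex_of_real R - z) = R - Re z"
      using neg r by (simp only: norm_of_real)
    hence "norm (of_real R - x) < cmod (complex_of_real R - z)" using neg r by simp
    hence "invertible_el ((of_real R - x) - emb (complex_of_real R - z))" by (rule N2)
    moreover have "(of_real R - x) - emb (complex_of_real R - z) = - (x - emb z)"
      by (simp add: emb_diff emb_of_real)
    ultimately show False using ni inv_el_minus by metis
  qed
qed

lemma pc_inv_shift: assumes "pc x" "r > 0" shows "invertible_el (x + of_real r)"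
proof -
  have "positive_el emb st x" using pc_pos assms by blast
  hence "\<not> invertible_el (x - emb (complex_of_real (-r))) \<Longrightarrow> Re (complex_of_real (-r)) \<ge> 0"
    unfolding positive_el_def by blast
  thus ?thesis using assms(2) by (cases "invertible_el (x + of_real r)") (auto simp: emb_of_real emb_minus)
qed

lemma SER: assumes t: "st t = t" "norm t \<le> 1"
  shows "\<exists>g. st g = g \<and> g * g = 1 - t \<and> norm (1 - g) \<le> 1"
proof -
  define f where "f k = cc k *\<^sub>R t^k" for k
  have pw: "norm (t^k) \<le> 1" for k
    using norm_power_ineq[of t k] power_le_one[OF norm_ge_zero t(2), of k] by linarith
  have nf: "norm (f k) \<le> \<bar>cc k\<bar>" for k
    unfolding f_def using pw[of k] by (simp add: mult_left_le)
  have sn: "summable (\<lambda>k. norm (f k))"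
    by (rule summable_comparison_test'[OF summable_cc]) (use nf in auto)
  have s: "summable f" using sn summable_norm_cancel by blast
  define g where "g = suminf f"
  have "g * g = (\<Sum>k. \<Sum>i\<le>k. f i * f (k - i))" unfolding g_def by (rule Cauchy_product[OF sn sn])
  also have "\<dots> = (\<Sum>k. (if k = 0 then 1 else if k = 1 then -t else 0))"
  proof (rule arg_cong[where f=suminf], rule ext)
    fix k
    have "(\<Sum>i\<le>k. f i * f (k - i)) = (\<Sum>i\<le>k. (cc i * cc (k - i)) *\<^sub>R t^k)"
      by (rule sum.cong) (auto simp: f_def power_add[symmetric])
    also have "\<dots> = (\<Sum>i\<le>k. cc i * cc (k - i)) *\<^sub>R t^k" by (simp add: scaleR_sum_left)
    finally show "(\<Sum>i\<le>k. f i * f (k - i)) = (if k = 0 then 1 else if k = 1 then -t else 0)"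
      by (simp add: cc_conv)
  qed
  also have "\<dots> = 1 - t"
    using suminf_finite[of "{0::nat,1}" "\<lambda>k. if k = 0 then 1 else if k = 1 then -t else (0::'a)"] by simp
  finally have gg: "g * g = 1 - t" .
  have "st g = (\<Sum>k. st (f k))" unfolding g_def by (rule bounded_linear.suminf[OF bl_st s])
  also have "(\<lambda>k. st (f k)) = f" by (rule ext) (simp add: f_def st_scaleR st_power t)
  finally have sg: "st g = g" unfolding g_def .
  have f0: "f 0 = 1" by (simp add: f_def cc_0)
  have "(\<Sum>k. f (Suc k)) = g - 1" using suminf_split_head[OF s] f0 g_def by simp
  hence "1 - g = - (\<Sum>k. f (Suc k))" by simp
  hence "norm (1 - g) = norm (\<Sum>k. f (Suc k))" by simp
  also have "\<dots> \<le> (\<Sum>k. \<bar>cc (Suc k)\<bar>)" by (rule norm_suminf_le[OF nf summable_cc_tail])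
  also have "\<dots> \<le> 1" by (rule suminf_cc_tail)
  finally show ?thesis using gg sg by blast
qed

lemma UL: assumes a: "st a = a" and b: "st b = b" and ab: "a * a + b * b = 1" shows "norm a \<le> 1"
proof -
  define u where "u = a + J * b"
  have su: "st u = a - J * b" by (simp add: u_def st_add st_mult st_J a b)
  have "(a - J * b) * (a + J * b) = a * a - (J * J) * (b * b)" by (simp add: algebra_simps)
  hence "st u * u = a * a + b * b" using su by (simp add: u_def JJ)
  hence "(norm u)\<^sup>2 = 1" using cstar_id[of u] ab by simp
  hence nu: "norm u = 1" using norm_ge_zero[of u] by (auto simp: power2_eq_1_iff)
  have "st u + u = scaleR 2 a" unfolding u_def by (simp add: st_add st_mult st_J a b algebra_simps scaleR_2)
  hence "2 * norm a = norm (st u + u)" by simp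
  also have "\<dots> \<le> 2" using norm_triangle_ineq[of "st u" u] nu by simp
  finally show ?thesis by simp
qed

lemma pc_sq: assumes h: "st h = h" shows "pc (h * h)"
proof (cases "h = 0")
  case True thus ?thesis by (simp add: pc_0)
next
  case False
  define \<rho> where "\<rho> = norm h"
  have rp: "\<rho> > 0" using False by (simp add: \<rho>_def)
  define t where "t = (1 / \<rho>\<^sup>2) *\<^sub>R (h * h)"
  have st_t: "st t = t" unfolding t_def by (simp add: st_scaleR st_mult h)
  have nt: "norm t \<le> 1" unfolding t_def using norm_sa_sq[OF h] rp by (simp add: \<rho>_def)
  obtain g where g: "st g = g" "g * g = 1 - t" "norm (1 - g) \<le> 1" using SER[OF st_t nt] by blast
  have "g * g + ((1/\<rho>) *\<^sub>R h) * ((1/\<rho>) *\<^sub>R h) = 1"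
    using g(2) rp by (simp add: t_def power2_eq_square)
  hence "norm g \<le> 1" using UL[of g "(1/\<rho>) *\<^sub>R h"] g(1) h by (simp add: st_scaleR)
  hence "norm (1 - t) \<le> 1" using g(2) norm_mult_ineq[of g g]
    by (metis mult_le_one norm_ge_zero order_trans)
  moreover have "of_real (\<rho>\<^sup>2) - h * h = \<rho>\<^sup>2 *\<^sub>R (1 - t)"
  proof -
    have "\<rho>\<^sup>2 *\<^sub>R t = h * h" using rp by (simp add: t_def)
    thus ?thesis by (simp add: scaleR_diff_right of_real_def)
  qed
  ultimately have "norm (of_real (\<rho>\<^sup>2) - h * h) \<le> \<rho>\<^sup>2" by (simp add: mult_left_le)
  thus ?thesis unfolding pc_def using h by (auto simp: st_mult intro!: exI[of _ "\<rho>\<^sup>2"])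
qed

end

context cstar begin

lemma pc_sa: "pc x \<Longrightarrow> st x = x" unfolding pc_def by blast

lemma SQ: assumes "pc x" shows "\<exists>y. pc y \<and> y * y = x"
proof -
  obtain R where r: "R \<ge> 0" "norm (of_real R - x) \<le> R" and sx: "st x = x"
    using assms unfolding pc_def by blast
  show ?thesis
  proof (cases "R = 0")
    case True
    hence "x = 0" using r by simp
    thus ?thesis using pc_0 by (intro exI[of _ 0]) simp
  next
    case False
    hence Rp: "R > 0" using r by simp
    define t where "t = (1/R) *\<^sub>R (of_real R - x)"
    have st_t: "st t = t" unfolding t_def by (simp add: st_scaleR st_diff sx)
    have nt: "norm t \<le> 1" unfolding t_def using r Rp by (simp add: divide_le_eq)
    obtain g where g: "st g = g" "g * g = 1 - t" "norm (1 - g) \<le> 1" using SER[OF st_t nt] by blast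
    have "1 - t = (1/R) *\<^sub>R x" using Rp unfolding t_def
      by (simp add: scaleR_diff_right of_real_def)
    define y where "y = sqrt R *\<^sub>R g"
    have "y * y = (sqrt R * sqrt R) *\<^sub>R (g * g)" by (simp add: y_def)
    also have "\<dots> = x" using g(2) \<open>1 - t = _\<close> Rp by simp
    finally have yy: "y * y = x" .
    have "of_real (sqrt R) - y = sqrt R *\<^sub>R (1 - g)"
      by (simp add: y_def scaleR_diff_right of_real_def)
    hence "norm (of_real (sqrt R) - y) \<le> sqrt R" using g(3) r(1) by (simp add: mult_left_le)
    hence "pc y" unfolding pc_def using g(1) r(1) by (auto simp: y_def st_scaleR intro!: exI[of _ "sqrt R"])
    thus ?thesis using yy by blast
  qed
qed

lemma pc_mult: assumes "pc a" "pc b" shows "pc (a * b)"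
proof -
  obtain \<alpha> \<beta> where "pc \<alpha>" "\<alpha> * \<alpha> = a" "pc \<beta>" "\<beta> * \<beta> = b" using SQ assms by metis
  hence "a * b = (\<alpha> * \<beta>) * (\<alpha> * \<beta>)" and "st (\<alpha> * \<beta>) = \<alpha> * \<beta>"
    by (auto simp: mult_ac st_mult pc_sa)
  thus ?thesis using pc_sq by metis
qed

lemma pc_inverse: assumes "pc b" "b * c = 1" shows "pc c"
proof -
  have sb: "st b = b" using assms pc_sa by blast
  have "st c * b = 1" using assms(2) st_mult[of c b] sb by (metis mult.commute st_1)
  hence sc: "st c = c" by (metis assms(2) mult.assoc mult_1_left mult_1_right)
  have "c = b * (c * c)" using assms(2) by (metis mult.assoc mult_1_left)
  thus ?thesis using pc_mult[OF assms(1) pc_sq[OF sc]] by simp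
qed

lemma pc_sandwich: assumes "pc a" "pc (of_real M - a)" "M > 0" shows "norm a \<le> M"
proof -
  obtain \<alpha> \<beta> where ab: "pc \<alpha>" "\<alpha> * \<alpha> = a" "pc \<beta>" "\<beta> * \<beta> = of_real M - a" using SQ assms by metis
  define s where "s = 1 / sqrt M"
  have "(s *\<^sub>R \<alpha>) * (s *\<^sub>R \<alpha>) + (s *\<^sub>R \<beta>) * (s *\<^sub>R \<beta>) = (s * s) *\<^sub>R (\<alpha> * \<alpha> + \<beta> * \<beta>)"
    by (simp add: scaleR_add_right)
  also have "\<dots> = 1" using ab assms(3) by (simp add: s_def of_real_def)
  finally have "norm (s *\<^sub>R \<alpha>) \<le> 1" using UL ab pc_sa st_scaleR by metis
  hence "norm \<alpha> \<le> sqrt M" using assms(3) by (simp add: s_def divide_le_eq)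
  hence "norm \<alpha> * norm \<alpha> \<le> sqrt M * sqrt M" using assms(3) by (intro mult_mono) auto
  hence "norm \<alpha> * norm \<alpha> \<le> M" using assms(3) by simp
  moreover have "norm a = norm (\<alpha> * \<alpha>)" using ab(2) by simp
  ultimately show ?thesis using norm_mult_ineq[of \<alpha> \<alpha>] by linarith
qed

lemma pc_antisym: assumes "pc a" "pc (- a)" shows "a = 0"
proof -
  have "norm a \<le> e" if "e > 0" for e
  proof -
    have "pc (of_real e + - a)" using pc_add[OF pc_of_real assms(2)] that by simp
    thus ?thesis using pc_sandwich[OF assms(1) _ that] by simp
  qed
  hence "norm a \<le> norm a / 2" by (metis half_gt_zero linorder_not_le norm_ge_zero not_less_iff_gr_or_eq zero_less_norm_iff divide_eq_0_iff)
  hence "norm a = 0" using norm_ge_zero[of a] by linarith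
  thus ?thesis by simp
qed

lemma pc_lower: assumes "pc b" "invertible_el b" shows "\<exists>\<eta>>0. pc (b - of_real \<eta>)"
proof -
  obtain c where bc: "b * c = 1" using assms(2) inv_el_iff by blast
  have pcc: "pc c" using pc_inverse[OF assms(1) bc] .
  define M where "M = norm c"
  have "c \<noteq> 0" using bc by auto
  hence Mp: "M > 0" by (simp add: M_def)
  have "pc (of_real M - c)" using pc_bound[of c M] pcc pc_sa by (simp add: M_def)
  hence "pc (b * (of_real M - c))" using pc_mult assms(1) by blast
  hence "pc ((1/M) *\<^sub>R (b * (of_real M - c)))" using pc_scale Mp by simp
  moreover have "(1/M) *\<^sub>R (b * (of_real M - c)) = b - of_real (1/M)"
  proof -
    have "b * (of_real M - c) = M *\<^sub>R b - 1" using bc by (simp add: right_diff_distrib scaleR_conv_of_real mult.commute)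
    hence "(1/M) *\<^sub>R (b * (of_real M - c)) = b - (1/M) *\<^sub>R 1" using Mp by (simp add: scaleR_diff_right)
    thus ?thesis by (simp add: of_real_def)
  qed
  ultimately show ?thesis using Mp by (intro exI[of _ "1/M"]) simp
qed

lemma NA: assumes k: "st k = k" "k \<noteq> 0"
  shows "\<not> invertible_el (of_real (norm k) - k) \<or> \<not> invertible_el (of_real (norm k) + k)"
proof (rule ccontr)
  assume "\<not> ?thesis"
  hence i1: "invertible_el (of_real (norm k) - k)" and i2: "invertible_el (of_real (norm k) + k)" by auto
  define \<rho> where "\<rho> = norm k"
  have rp: "\<rho> > 0" using k by (simp add: \<rho>_def)
  define a where "a = ((1/\<rho>) *\<^sub>R k) * ((1/\<rho>) *\<^sub>R k)"
  have sa: "st a = a" by (simp add: a_def st_mult st_scaleR k)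
  have pa: "pc a" unfolding a_def by (rule pc_sq) (simp add: st_scaleR k)
  have na: "norm a = 1" unfolding a_def using norm_sa_sq[OF k(1)] rp
    by (simp add: \<rho>_def power2_eq_square)
  have e1: "(of_real \<rho> - k) * (of_real \<rho> + k) = of_real (\<rho>\<^sup>2) - k * k"
    by (simp add: algebra_simps power2_eq_square)
  have e2: "a = (1/\<rho>\<^sup>2) *\<^sub>R (k * k)" by (simp add: a_def power2_eq_square)
  have "of_real (1/\<rho>\<^sup>2) * ((of_real \<rho> - k) * (of_real \<rho> + k)) = (1/\<rho>\<^sup>2) *\<^sub>R (of_real (\<rho>\<^sup>2) - k * k)"
    unfolding e1 by (simp add: scaleR_conv_of_real)
  also have "\<dots> = 1 - a" using rp e2 by (simp add: scaleR_diff_right of_real_def)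
  finally have "1 - a = of_real (1/\<rho>\<^sup>2) * ((of_real \<rho> - k) * (of_real \<rho> + k))" by simp
  moreover have "invertible_el (of_real (1/\<rho>\<^sup>2) :: 'a)"
    unfolding inv_el_iff
  proof (intro exI[of _ "of_real (\<rho>\<^sup>2)"])
    have "(1/\<rho>\<^sup>2) * \<rho>\<^sup>2 = 1" using rp by simp
    thus "of_real (1/\<rho>\<^sup>2) * of_real (\<rho>\<^sup>2) = (1::'a)" by (metis of_real_1 of_real_mult)
  qed
  ultimately have ib: "invertible_el (1 - a)" using inv_el_mult i1 i2 unfolding \<rho>_def by metis
  have pb: "pc (1 - a)" using pc_bound[OF sa, of 1] na by simp
  obtain \<eta> where e: "\<eta> > 0" "pc (1 - a - of_real \<eta>)" using pc_lower[OF pb ib] by blast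
  define \<eta>' where "\<eta>' = min \<eta> (1/2)"
  have "pc ((1 - a - of_real \<eta>) + of_real (\<eta> - \<eta>'))"
    by (rule pc_add[OF e(2) pc_of_real]) (simp add: \<eta>'_def)
  hence "pc (of_real (1 - \<eta>') - a)" by (simp add: algebra_simps)
  moreover have "1 - \<eta>' > 0" "\<eta>' > 0" using e(1) by (auto simp: \<eta>'_def)
  ultimately have "norm a \<le> 1 - \<eta>'" using pc_sandwich[OF pa] by blast
  thus False using na \<open>\<eta>' > 0\<close> by simp
qed

lemma SP: assumes "positive_el emb st a" shows "pc a"
proof -
  have sa: "st a = a" and pos: "\<And>z. \<not> invertible_el (a - emb z) \<Longrightarrow> Re z \<ge> 0"
    using assms unfolding positive_el_def by auto
  define N where "N = norm a"
  define k where "k = of_real N - a"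
  have sk: "st k = k" by (simp add: k_def st_diff sa)
  have "norm k \<le> N"
  proof (rule ccontr)
    assume "\<not> norm k \<le> N"
    hence gt: "norm k > N" by simp
    hence k0: "k \<noteq> 0" using norm_ge_zero[of a] by (auto simp: N_def)
    from NA[OF sk k0] show False
    proof
      assume ni: "\<not> invertible_el (of_real (norm k) - k)"
      have "of_real (norm k) - k = a - emb (complex_of_real (N - norm k))"
        by (simp only: emb_of_real) (simp add: k_def)
      hence "Re (complex_of_real (N - norm k)) \<ge> 0" using pos ni by metis
      thus False using gt by simp
    next
      assume ni: "\<not> invertible_el (of_real (norm k) + k)"
      have "cmod (complex_of_real (norm k + N)) = \<bar>norm k + N\<bar>" by (simp only: norm_of_real)
      hence "norm a < cmod (complex_of_real (norm k + N))" using gt k0 norm_ge_zero[of a] by (simp add: N_def)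
      hence "invertible_el (a - emb (complex_of_real (norm k + N)))" by (rule N2)
      moreover have "a - emb (complex_of_real (norm k + N)) = - (of_real (norm k) + k)"
        by (simp only: emb_of_real) (simp add: k_def algebra_simps)
      ultimately show False using ni inv_el_minus by metis
    qed
  qed
  thus ?thesis unfolding pc_def k_def using sa by (auto simp: N_def intro!: exI[of _ N])
qed

lemma pc_unique: assumes "pc r" "pc y" "r * r = y * y" shows "r = y"
proof -
  define h where "h = r - y"
  have sh: "st h = h" using assms by (simp add: h_def st_diff pc_sa)
  define x1 where "x1 = h * h * r"
  define x2 where "x2 = h * h * y"
  have p1: "pc x1" unfolding x1_def by (rule pc_mult[OF pc_sq[OF sh] assms(1)])
  have p2: "pc x2" unfolding x2_def by (rule pc_mult[OF pc_sq[OF sh] assms(2)])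
  have "x1 + x2 = h * (r * r - y * y)" by (simp add: x1_def x2_def h_def algebra_simps)
  hence "x2 = - x1" using assms(3) by (simp add: eq_neg_iff_add_eq_0 add.commute)
  hence "x1 = 0" using pc_antisym p1 p2 by simp
  moreover have "x2 = 0" using \<open>x2 = - x1\<close> \<open>x1 = 0\<close> by simp
  ultimately have h3: "h * h * h = 0" by (simp add: x1_def x2_def h_def algebra_simps)
  have sh2: "st (h * h) = h * h" by (simp add: st_mult sh)
  have "(h * h) * (h * h) = 0" using h3 by (metis mult.assoc mult_zero_right)
  hence "norm (h * h) = 0" using norm_sa_sq[OF sh2] by simp
  hence "norm h = 0" using norm_sa_sq[OF sh] by simp
  thus ?thesis by (simp add: h_def)
qed

end

context cstar begin

lemma pc_xsx: "pc (x * st x)"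
proof -
  define h where "h = x + st x"
  define k where "k = J * (x - st x)"
  have sh: "st h = h" by (simp add: h_def st_add add.commute)
  have sk: "st k = k" by (simp add: k_def st_mult st_diff st_J algebra_simps)
  have "k * k = (J * J) * ((x - st x) * (x - st x))" by (simp add: k_def mult_ac)
  hence "h * h + k * k = (x + st x) * (x + st x) - (x - st x) * (x - st x)"
    by (simp add: h_def JJ)
  also have "\<dots> = 4 *\<^sub>R (x * st x)" by (simp add: algebra_simps scaleR_conv_of_real)
  finally have e: "x * st x = (1/4) *\<^sub>R (h * h + k * k)" by simp
  show ?thesis unfolding e by (intro pc_scale pc_add pc_sq sh sk) simp
qed

lemma st_self_mult: "st (st x * x) = st x * x" by (simp add: st_mult mult.commute)

end

locale hmod = cstar emb st for emb :: "complex \<Rightarrow> 'a::{real_normed_algebra_1,comm_ring_1,banach}" and st +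
  fixes act :: "'a \<Rightarrow> 'm::ab_group_add \<Rightarrow> 'm" and ip :: "'m \<Rightarrow> 'm \<Rightarrow> 'a"
  assumes hm: "hilbert_module emb st act ip"
begin

lemma hmc: "(\<forall>x y z. ip (x + y) z = ip x z + ip y z) \<and> (\<forall>a x y. ip (act a x) y = a * ip x y) \<and>
   (\<forall>x y. ip y x = st (ip x y)) \<and> (\<forall>x. positive_el emb st (ip x x))"
  using hm unfolding hilbert_module_def by (elim conjE) (intro conjI)

lemma ip_add1: "ip (x + y) z = ip x z + ip y z" using hmc by blast
lemma ip_act1: "ip (act a x) y = a * ip x y" using hmc by blast
lemma ip_sym: "ip y x = st (ip x y)" using hmc by blast
lemma ip_pos: "positive_el emb st (ip x x)" using hmc by blast

lemma ip_zero1: "ip 0 z = 0" using ip_add1[of 0 0 z] by simp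
lemma ip_minus1: "ip (- x) z = - ip x z"
  using ip_add1[of x "-x" z] by (metis ip_zero1 neg_eq_iff_add_eq_0 right_minus)
lemma ip_diff1: "ip (x - y) z = ip x z - ip y z"
  using ip_add1[of x "-y" z] by (simp add: ip_minus1)
lemma ip_sum1: "ip (sum f A) z = (\<Sum>i\<in>A. ip (f i) z)"
  by (induction A rule: infinite_finite_induct) (auto simp: ip_zero1 ip_add1)

lemma cauchy_schwarz:
  assumes "ip x x = 1" "ip y y = 1" shows "pc (1 - ip x y * st (ip x y))"
proof -
  define g where "g = ip x y"
  define z where "z = x - act g y"
  have zy: "ip z y = 0" by (simp add: z_def ip_diff1 ip_act1 assms g_def)
  have zx: "ip z x = 1 - g * st g" by (simp add: z_def ip_diff1 ip_act1 assms g_def ip_sym[of x y])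
  have e: "ip (x - act g y) z = ip x z - ip (act g y) z" by (rule ip_diff1)
  hence "ip z z = ip x z - ip (act g y) z" by (simp only: z_def[symmetric])
  also have "\<dots> = st (ip z x) - g * st (ip z y)" by (simp only: ip_act1 ip_sym[of z x] ip_sym[of z y] st_st)
  finally have "ip z z = st (ip z x) - g * st (ip z y)" .
  also have "\<dots> = 1 - g * st g" by (simp add: zx zy st_diff st_mult mult.commute)
  finally show ?thesis using SP[OF ip_pos[of z]] by (simp add: g_def)
qed

end

lemma grp_aux: "(y::'a::ab_group_add) = x - a + b \<Longrightarrow> a - b = c \<Longrightarrow> x = y + c"
  by (simp add: algebra_simps)

lemma sum4_swap:
  "(\<Sum>i\<in>A. \<Sum>l\<in>B. \<Sum>j\<in>D. \<Sum>k\<in>C. f j k i l) = (\<Sum>j\<in>D. \<Sum>k\<in>C. \<Sum>i\<in>A. \<Sum>l\<in>B. f j k i l)"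
proof -
  have "(\<Sum>i\<in>A. \<Sum>l\<in>B. \<Sum>j\<in>D. \<Sum>k\<in>C. f j k i l) = (\<Sum>i\<in>A. \<Sum>j\<in>D. \<Sum>l\<in>B. \<Sum>k\<in>C. f j k i l)"
    apply (rule sum.cong[OF refl]) by (rule sum.swap)
  also have "\<dots> = (\<Sum>j\<in>D. \<Sum>i\<in>A. \<Sum>l\<in>B. \<Sum>k\<in>C. f j k i l)"
    by (rule sum.swap)
  also have "\<dots> = (\<Sum>j\<in>D. \<Sum>i\<in>A. \<Sum>k\<in>C. \<Sum>l\<in>B. f j k i l)"
    apply (rule sum.cong[OF refl], rule sum.cong[OF refl]) by (rule sum.swap)
  also have "\<dots> = (\<Sum>j\<in>D. \<Sum>k\<in>C. \<Sum>i\<in>A. \<Sum>l\<in>B. f j k i l)"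
    apply (rule sum.cong[OF refl]) by (rule sum.swap)
  finally show ?thesis .
qed

context hmod begin

lemma frame_bound:
  assumes rank: "has_rank act ip d" and d: "d > 0" and unit: "\<forall>j<n. ip (\<tau> j) (\<tau> j) = 1"
  shows "pc ((\<Sum>j<n. \<Sum>k<n. ip (\<tau> j) (\<tau> k) * st (ip (\<tau> j) (\<tau> k))) - of_real (real n ^ 2 / real d))"
proof -
  obtain \<omega> where exp: "\<forall>x. x = (\<Sum>j<d. act (ip x (\<omega> j)) (\<omega> j))"
    using rank unfolding has_rank_def by blast
  define a where "a j i = ip (\<tau> j) (\<omega> i)" for j i
  have g: "ip (\<tau> j) (\<tau> k) = (\<Sum>i<d. a j i * st (a k i))" for j k
  proof -
    have "ip (\<tau> j) (\<tau> k) = ip (\<Sum>i<d. act (ip (\<tau> j) (\<omega> i)) (\<omega> i)) (\<tau> k)"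
      using exp[rule_format, of "\<tau> j"] by (rule arg_cong[where f="\<lambda>u. ip u (\<tau> k)"])
    also have "\<dots> = (\<Sum>i<d. ip (\<tau> j) (\<omega> i) * ip (\<omega> i) (\<tau> k))" by (simp add: ip_sum1 ip_act1)
    also have "\<dots> = (\<Sum>i<d. a j i * st (a k i))"
      by (rule sum.cong[OF refl]) (simp add: a_def ip_sym[of "\<tau> k" "\<omega> _"])
    finally show ?thesis .
  qed
  define M where "M i l = (\<Sum>k<n. st (a k i) * a k l)" for i l
  define G where "G = (\<Sum>j<n. \<Sum>k<n. ip (\<tau> j) (\<tau> k) * st (ip (\<tau> j) (\<tau> k)))"
  define F where "F j k i l = a j i * st (a k i) * st (a j l) * a k l" for j k i l
  have "G = (\<Sum>j<n. \<Sum>k<n. \<Sum>i<d. \<Sum>l<d. F j k i l)"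
    unfolding G_def g by (simp add: st_sum st_mult sum_product F_def mult_ac)
  also have "\<dots> = (\<Sum>i<d. \<Sum>l<d. \<Sum>j<n. \<Sum>k<n. F j k i l)" by (rule sum4_swap[symmetric])
  also have "\<dots> = (\<Sum>i<d. \<Sum>l<d. M i l * st (M i l))"
    unfolding M_def by (simp add: st_sum st_mult sum_product F_def mult_ac)
  finally have GM: "G = (\<Sum>i<d. \<Sum>l<d. M i l * st (M i l))" .
  have diag: "(\<Sum>i<d. M i i) = of_nat n"
  proof -
    have "(\<Sum>i<d. M i i) = (\<Sum>k<n. \<Sum>i<d. a k i * st (a k i))"
      unfolding M_def by (subst sum.swap) (simp add: mult.commute)
    also have "\<dots> = (\<Sum>k<n. ip (\<tau> k) (\<tau> k))" by (simp add: g)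
    also have "\<dots> = (\<Sum>k<n. 1)" using unit by simp
    finally show ?thesis by simp
  qed
  have sM: "st (M i i) = M i i" for i by (simp add: M_def st_sum st_mult mult.commute)
  define R where "R = (\<Sum>i<d. \<Sum>l\<in>{..<d} - {i}. M i l * st (M i l))"
  have pR: "pc R" unfolding R_def by (intro pc_sum pc_xsx)
  have "G = (\<Sum>i<d. M i i * st (M i i) + (\<Sum>l\<in>{..<d} - {i}. M i l * st (M i l)))"
    unfolding GM by (rule sum.cong[OF refl]) (simp add: sum.remove)
  hence GR: "G = (\<Sum>i<d. M i i * M i i) + R" by (simp add: sM R_def sum.distrib)
  define \<mu> where "\<mu> = real n / real d"
  have sq: "(\<Sum>i<d. (M i i - of_real \<mu>) * (M i i - of_real \<mu>)) =
      (\<Sum>i<d. M i i * M i i) - 2 * of_real \<mu> * (\<Sum>i<d. M i i) + of_nat d * (of_real \<mu> * of_real \<mu>)"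
    by (simp add: algebra_simps sum.distrib sum_subtractf sum_distrib_left)
  have ar: "2 * \<mu> * real n - real d * (\<mu> * \<mu>) = real n ^ 2 / real d"
    using d by (simp add: \<mu>_def field_simps power2_eq_square)
  have "2 * of_real \<mu> * (\<Sum>i<d. M i i) - of_nat d * (of_real \<mu> * of_real \<mu>) = (of_real (2 * \<mu> * real n - real d * (\<mu> * \<mu>)) :: 'a)"
    unfolding diag by simp
  hence "2 * of_real \<mu> * (\<Sum>i<d. M i i) - of_nat d * (of_real \<mu> * of_real \<mu>) = (of_real (real n ^ 2 / real d) :: 'a)"
    using ar by simp
  hence "(\<Sum>i<d. M i i * M i i) = (\<Sum>i<d. (M i i - of_real \<mu>) * (M i i - of_real \<mu>)) + of_real (real n ^ 2 / real d)"
    by (rule grp_aux[OF sq])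
  hence "G - of_real (real n ^ 2 / real d) = (\<Sum>i<d. (M i i - of_real \<mu>) * (M i i - of_real \<mu>)) + R"
    using GR by simp
  moreover have "pc (\<Sum>i<d. (M i i - of_real \<mu>) * (M i i - of_real \<mu>))"
    by (intro pc_sum pc_sq) (simp add: st_diff sM)
  ultimately show ?thesis using pR pc_add unfolding G_def by metis
qed

end

lemma ar_aux: fixes x e :: real
  assumes "x \<noteq> 0" "x - 1 \<noteq> 0" "e \<noteq> 0"
  shows "1/(x*(x-1)) * x + (x - e)/(e*(x-1)) = 1/(x*(x-1)) * (x^2/e)"
proof -
  have a: "1/(x*(x-1)) * x = e/(e*(x-1))" using assms by simp
  have b: "1/(x*(x-1)) * (x^2/e) = x/(e*(x-1))" using assms by (simp add: power2_eq_square mult.commute)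
  have c: "e/(e*(x-1)) + (x - e)/(e*(x-1)) = x/(e*(x-1))" unfolding add_divide_distrib[symmetric] by simp
  show ?thesis using a b c by simp
qed

context hmod begin

lemma main:
  assumes rank: "has_rank act ip d" and n: "n \<ge> max d 2" and unit: "\<forall>j<n. ip (\<tau> j) (\<tau> j) = 1"
  shows "1 \<ge> norm (I_MRMS emb st ip n \<tau>)
    \<and> cle emb st (I_MRMS emb st ip n \<tau>) (emb (complex_of_real (norm (I_MRMS emb st ip n \<tau>))))
    \<and> cle emb st (emb (complex_of_real (sqrt ((real n - real d) / (real d * (real n - 1))))))
                 (I_MRMS emb st ip n \<tau>)"
proof -
  define S where "S = (\<Sum>j<n. \<Sum>k\<in>{..<n} - {j}. ip (\<tau> j) (\<tau> k) * ip (\<tau> k) (\<tau> j))"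
  define c where "c = 1 / (real n * (real n - 1))"
  define s where "s = of_real c * S"
  have n2: "n \<ge> 2" and nd: "n \<ge> d" using n by auto
  have cp: "c > 0" using n2 by (simp add: c_def)
  have cn: "c * (real n * (real n - 1)) = 1" using n2 by (simp add: c_def)
  have Iu: "I_MRMS emb st ip n \<tau> = psqrt emb st s"
    unfolding I_MRMS_def s_def S_def c_def emb_of_real ..
  have S': "S = (\<Sum>j<n. \<Sum>k\<in>{..<n} - {j}. ip (\<tau> j) (\<tau> k) * st (ip (\<tau> j) (\<tau> k)))"
    unfolding S_def by (intro sum.cong refl arg_cong2[where f="(*)"] ip_sym)
  have pS: "pc S" unfolding S' by (intro pc_sum pc_xsx)
  have sS: "s = c *\<^sub>R S" by (simp add: s_def scaleR_conv_of_real)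
  have pcs: "pc s" unfolding sS using pS cp by (simp add: pc_scale)
  have cnt: "(\<Sum>j<n. \<Sum>k\<in>{..<n} - {j}. (1::'a)) = of_real (real n * (real n - 1))"
  proof -
    have "(\<Sum>j<n. \<Sum>k\<in>{..<n} - {j}. (1::'a)) = (\<Sum>j<n. of_nat (n - 1))"
      by (rule sum.cong[OF refl]) simp
    also have "\<dots> = of_real (real n * (real n - 1))"
    proof -
      have "(of_nat (n - 1) :: 'a) = of_nat n - 1" using of_nat_diff[of 1 n] n2 by simp
      thus ?thesis by (simp add: of_nat_diff)
    qed
    finally show ?thesis .
  qed
  have "1 - s = c *\<^sub>R (\<Sum>j<n. \<Sum>k\<in>{..<n} - {j}. (1 - ip (\<tau> j) (\<tau> k) * st (ip (\<tau> j) (\<tau> k))))"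
  proof -
    have "(\<Sum>j<n. \<Sum>k\<in>{..<n} - {j}. (1 - ip (\<tau> j) (\<tau> k) * st (ip (\<tau> j) (\<tau> k))))
        = of_real (real n * (real n - 1)) - S"
      unfolding S' cnt[symmetric] by (simp add: sum_subtractf)
    hence "c *\<^sub>R (\<Sum>j<n. \<Sum>k\<in>{..<n} - {j}. (1 - ip (\<tau> j) (\<tau> k) * st (ip (\<tau> j) (\<tau> k))))
        = c *\<^sub>R of_real (real n * (real n - 1)) - s" by (simp add: sS scaleR_diff_right)
    also have "c *\<^sub>R (of_real (real n * (real n - 1)) :: 'a) = 1"
      using cn by (metis of_real_1 of_real_mult scaleR_conv_of_real)
    finally show ?thesis by simp
  qed
  hence p1s: "pc (1 - s)"
  proof (simp only:, intro pc_scale pc_sum)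
    fix j k assume "j \<in> {..<n}" "k \<in> {..<n} - {j}"
    thus "pc (1 - ip (\<tau> j) (\<tau> k) * st (ip (\<tau> j) (\<tau> k)))"
      using unit by (intro cauchy_schwarz) auto
  qed (use cp in auto)
  obtain y where y: "pc y" "y * y = s" using SQ[OF pcs] by blast
  have sy: "st y = y" using y(1) pc_sa by blast
  have psq: "psqrt emb st s = y" unfolding psqrt_def
  proof (rule the_equality)
    show "positive_el emb st y \<and> y * y = s" using y pc_pos by blast
  next
    fix r assume "positive_el emb st r \<and> r * r = s"
    thus "r = y" using pc_unique[OF SP y(1)] y(2) by metis
  qed
  have "norm s \<le> 1" using pc_sandwich[OF pcs _ zero_less_one] p1s by simp
  hence "(norm y)\<^sup>2 \<le> 1\<^sup>2" using norm_sa_sq[OF sy] y(2) by simp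
  hence g1: "norm y \<le> 1" by (rule power2_le_imp_le) simp
  have g2: "cle emb st y (emb (complex_of_real (norm y)))"
    unfolding cle_def emb_of_real by (rule pc_pos, rule pc_bound[OF sy]) simp
  define c0 where "c0 = (real n - real d) / (real d * (real n - 1))"
  have c0nn: "c0 \<ge> 0" using nd n2 by (simp add: c0_def)
  have g3: "positive_el emb st (y - of_real (sqrt c0))"
  proof (cases "c0 = 0")
    case True thus ?thesis using pc_pos[OF y(1)] by simp
  next
    case False
    hence c0p: "c0 > 0" using c0nn by simp
    have dp: "d > 0" using c0p by (cases "d = 0") (auto simp: c0_def)
    define G where "G = (\<Sum>j<n. \<Sum>k<n. ip (\<tau> j) (\<tau> k) * st (ip (\<tau> j) (\<tau> k)))"
    have pG: "pc (G - of_real (real n ^ 2 / real d))"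
      unfolding G_def by (rule frame_bound[OF rank dp unit])
    have GS: "G = S + of_nat n"
    proof -
      have "G = (\<Sum>j<n. ip (\<tau> j) (\<tau> j) * st (ip (\<tau> j) (\<tau> j))
               + (\<Sum>k\<in>{..<n} - {j}. ip (\<tau> j) (\<tau> k) * st (ip (\<tau> j) (\<tau> k))))"
        unfolding G_def by (rule sum.cong[OF refl]) (simp add: sum.remove)
      also have "\<dots> = (\<Sum>j<n. 1 + (\<Sum>k\<in>{..<n} - {j}. ip (\<tau> j) (\<tau> k) * st (ip (\<tau> j) (\<tau> k))))"
        by (rule sum.cong[OF refl]) (simp add: unit)
      also have "\<dots> = S + of_nat n" unfolding S' by (simp add: sum.distrib)
      finally show ?thesis .
    qed
    have ar: "c * real n + c0 = c * (real n ^ 2 / real d)"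
      using ar_aux[of "real n" "real d"] n2 dp by (simp add: c_def c0_def)
    define X where "X = real n ^ 2 / real d"
    have e1: "c *\<^sub>R (G - of_real X) = s + (of_real c * of_nat n - of_real c * of_real X)"
      by (simp add: GS sS scaleR_conv_of_real algebra_simps)
    have "c * real n - c * X = - c0" using ar by (simp add: X_def)
    hence "of_real (c * real n - c * X) = (of_real (- c0) :: 'a)" by simp
    hence "of_real c * of_nat n - of_real c * of_real X = (- of_real c0 :: 'a)" by simp
    hence "c *\<^sub>R (G - of_real X) = s - of_real c0" using e1 by simp
    hence "pc (s - of_real c0)" using pc_scale[OF pG[folded X_def], of c] cp by simp
    define q where "q = sqrt c0"
    have qp: "q > 0" using c0p by (simp add: q_def)
    have qq: "of_real q * of_real q = (of_real c0 :: 'a)" using c0nn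
      by (simp add: q_def flip: of_real_mult)
    have pyq: "pc (y + of_real q)" using pc_add[OF y(1) pc_of_real] qp by simp
    obtain w where w: "(y + of_real q) * w = 1"
      using pc_inv_shift[OF y(1) qp] inv_el_iff by blast
    have pw: "pc w" by (rule pc_inverse[OF pyq w])
    have "(s - of_real c0) * w = (y - of_real q) * ((y + of_real q) * w)"
      using y(2) qq by (simp add: algebra_simps)
    also have "\<dots> = y - of_real q" using w by simp
    finally have "pc (y - of_real q)" using pc_mult[OF \<open>pc (s - of_real c0)\<close> pw] by simp
    thus ?thesis unfolding q_def by (rule pc_pos)
  qed
  show ?thesis unfolding Iu psq cle_def emb_of_real
    using g1 g2 g3 unfolding cle_def emb_of_real c0_def by blast
qed

end

theorem proposition3p2:
  fixes emb :: "complex \<Rightarrow> 'a::{real_normed_algebra_1,comm_ring_1,banach}"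
    and st :: "'a \<Rightarrow> 'a"
    and act :: "'a \<Rightarrow> 'm::ab_group_add \<Rightarrow> 'm"
    and ip :: "'m \<Rightarrow> 'm \<Rightarrow> 'a"
    and d n :: nat
    and \<tau> :: "nat \<Rightarrow> 'm"
  assumes "cstar_algebra emb st"
    and "sigma_finite_Wstar emb st \<or> AWstar emb st"
    and "hilbert_module emb st act ip"
    and "has_rank act ip d"
    and "n \<ge> max d 2"
    and "\<forall>j<n. ip (\<tau> j) (\<tau> j) = 1"
  shows "1 \<ge> norm (I_MRMS emb st ip n \<tau>)
    \<and> cle emb st (I_MRMS emb st ip n \<tau>) (emb (complex_of_real (norm (I_MRMS emb st ip n \<tau>))))
    \<and> cle emb st (emb (complex_of_real (sqrt ((real n - real d) / (real d * (real n - 1))))))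
                 (I_MRMS emb st ip n \<tau>)"
  proof -
  interpret hmod emb st act ip
    using assms(1,3) by (simp add: hmod_def hmod_axioms_def cstar_def)
  show ?thesis using main[OF assms(4,5,6)] .
qed

end
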